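(* Assume (A1) and (A2), and let $\alpha>0$ be arbitrary. Along every trajectory of the algorithm described in the context, for all $k\ge0$, $$V_\psi(k+1)-V_\psi(k)\le-\tfrac12\|\bm e_\psi(k)\|^2+\beta_{\psi\xi}\|\bm e_\xi(k)\|^2+\beta_{\psi x}\|\bm e_x(k)\|^2.$$
   Context: Game. $N$ coalitions; coalition $i$ has agents $i1,\dots,in_i$; $\mathcal V_i=\{i1,\dots,in_i\}$, $\mathcal V=\bigcup_i\mathcal V_i$, $n_{\mathrm{sum}}=\sum_in_i$; agents ordered lexicographically. Agent $ij$ has state $x_{ij}\in\mathbb{R}$; $\bm x_i=(x_{i1},\dots,x_{in_i})^T$, $\bm x=(\bm x_1^T,\dots,\bm x_N^T)^T$. Costs $f_{ij}:\mathbb{R}^{n_{\mathrm{sum}}}\to\mathbb{R}$, $f_i=\sum_jf_{ij}$. For $\bm y\in\mathbb{R}^N$, $g_i(\bm y)=f_i((y_1\mathbf 1_{n_1}^T,\dots,y_N\mathbf 1_{n_N}^T)^T)$, $\mathcal Q(\bm y)=(\partial g_i/\partial y_i(\bm y))_{i=1}^N$; $\bm y^*$ denotes the Nash equilibrium of the game $\min_{y_i}g_i(\bm y)$ (i.e. $\mathcal Q(\bm y^* )=0$ under convexity). Graph. Directed graph $\mathcal G=(\mathcal V,\mathcal E)$, $(pq,ij)\in\mathcal E$ meaning $ij$ receives from $pq$. $a_{ij}^{pq}=1$ if $(pq,ij)\in\mathcal E$, $pq\ne ij$, else $0$; $d_{ij}=\sum_{pq}a_{ij}^{pq}$; Laplacian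 $L$ with diagonal $d_{ij}$, off-diagonal $-a_{ij}^{pq}$. $\mathcal G_i$: subgraph induced on $\mathcal V_i$. $\mathcal N_{ij}^{\mathrm{in}}$, $\mathcal N_{ij}^{i\text{-in}}$, $\mathcal N_{ij}^{i\text{-out}}$: in-neighbors in $\mathcal G$, in-neighbors and out-neighbors in $\mathcal G_i$. Assumptions. (A1) $\mathcal G$ and every $\mathcal G_i$ are strongly connected. (A2) each $f_{ij}$ is convex, $C^2$, with $\nabla f_{ij}$ Lipschitz of constant $l_{ij}$. (A3) $\exists l>0$: $(\bm a-\bm b)^T(\mathcal Q(\bm a)-\mathcal Q(\bm b))\ge l\|\bm a-\bm b\|^2$ for all $\bm a,\bm b$. Algorithm. Weights $r_{ij}^{im}>0$ for $im\in\mathcal N_{ij}^{i\text{-in}}\cup\{ij\}$ summing to 1, $c_{im}^{ij}>0$ for $im\in\mathcal N_{ij}^{i\text{-out}}\cup\{ij\}$ summing to 1, other within-coalition weights $0$; $R_i=[r_{ij}^{im}]$, $C_i=[c_{ij}^{im}]$ ($j$ row, $m$ column). Step size $\alpha>0$. Initialization: $x_{ij}(0),\bm\xi_{ij}(0)\in\mathbb{R}^{n_{\mathrm{sum}}}$ arbitrary, $\psi_{ij}^{il}(0)=\frac{\partial f_{ij}}{\partial x_{il}}(\bm\xi_{ij}(0))$. For $k\ge0$: $x_{ij}(k+1)=\sum_mr_{ij}^{im}x_{im}(k)-\frac{\alpha}{n_i}\sum_{m=1}^{n_i}\psi_{ij}^{im}(k)$; $\xi_{ij}^{pq}(k+1)=\xi_{ij}^{pq}(k)-\frac1{d_{ij}+a_{ij}^{pq}}\big(\sum_{lm\in\mathcal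 N_{ij}^{\mathrm{in}}}(\xi_{ij}^{pq}(k)-\xi_{lm}^{pq}(k))+a_{ij}^{pq}(\xi_{ij}^{pq}(k)-x_{pq}(k))\big)$ for all $pq\in\mathcal V$; $\psi_{ij}^{il}(k+1)=\sum_mc_{ij}^{im}\psi_{im}^{il}(k)+\frac{\partial f_{ij}}{\partial x_{il}}(\bm\xi_{ij}(k+1))-\frac{\partial f_{ij}}{\partial x_{il}}(\bm\xi_{ij}(k))$. Auxiliary quantities. $u_i$: $u_i^TR_i=u_i^T$, $u_i^T\mathbf 1=n_i$; $v_i$: $C_iv_i=v_i$, $\mathbf 1^Tv_i=n_i$. $\bar C_i=C_i-\frac{v_i\mathbf 1^T}{n_i}$, $\bar I_{v_i}=I-\frac{v_i\mathbf 1^T}{n_i}$, $\bar R_i=R_i-\frac{\mathbf 1u_i^T}{n_i}$, $\bar I_{u_i}=I-\frac{\mathbf 1u_i^T}{n_i}$. $\Gamma$, $A_d$: diagonal $n_{\mathrm{sum}}^2\times n_{\mathrm{sum}}^2$ matrices with entries $\frac1{d_{ij}+a_{ij}^{pq}}$, $a_{ij}^{pq}$ indexed by $(ij,pq)$, $ij$ outer, $pq$ inner. $H=\Gamma(L\otimes I_{n_{\mathrm{sum}}}+A_d)$, $\mathcal M=I-H$. $W_{c_i},W_{R_i},W_{\mathcal M}$: symmetric positive definite solutions of $\bar C_i^TW\bar C_i-W=-I$, $\bar R_i^TW\bar R_i-W=-I$, $\mathcal M^TW\mathcal M-W=-I$. Spectral matrix norms. $\beta_{\psi\xi}=2\max_{i,j}\{(2\|\bar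 C_i^TW_{c_i}\bar I_{v_i}\|^2+\|\bar I_{v_i}^TW_{c_i}\bar I_{v_i}\|)l_{ij}^2\}\|H\|^2$, $\beta_{\psi x}=n_{\mathrm{sum}}\beta_{\psi\xi}$. Errors and Lyapunov functions. $\bm\psi_i=(\psi_{i1}^{i1},\dots,\psi_{i1}^{in_i},\psi_{i2}^{i1},\dots,\psi_{in_i}^{in_i})^T\in\mathbb{R}^{n_i^2}$, $\bar{\bm\psi}_i=\frac1{n_i}(\mathbf 1_{n_i}^T\otimes I_{n_i})\bm\psi_i$, $\bm e_{\psi_i}=\bm\psi_i-v_i\otimes\bar{\bm\psi}_i$. $\bar x_i=u_i^T\bm x_i/n_i$, $e_{\bar x_i}=\bar x_i-y_i^*$, $\bm e_{x_i}=\bm x_i-\mathbf 1_{n_i}\bar x_i$, $\bar{\bm X}=(\bar x_1\mathbf 1_{n_1}^T,\dots,\bar x_N\mathbf 1_{n_N}^T)^T$. $\bm\xi_i=(\bm\xi_{i1}^T,\dots,\bm\xi_{in_i}^T)^T$, $\bm e_{\xi_i}=\bm\xi_i-\mathbf 1_{n_i}\otimes\bar{\bm X}$. $\bm e_\psi,\bm e_{\bar x},\bm e_x,\bm e_\xi$: stacks over $i=1,\dots,N$. $V_\psi=\sum_i\bm e_{\psi_i}^T(W_{c_i}\otimes I_{n_i})\bm e_{\psi_i}$, $V_{\bar x}=\sum_i\frac{n_i^3}{\alpha u_i^Tv_i}e_{\bar x_i}^2$, $V_\xi=\bm e_\xi^TW_{\mathcal M}\bm e_\xi$, $V_x=\sum_i\bm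 e_{x_i}^TW_{R_i}\bm e_{x_i}$, each evaluated at time $k$. *)

theory Defs
  imports "HOL-Analysis.Analysis"
begin

(* Coalitions are the elements of a finite type 'c, agents the elements of a finite type 'a;
   coal :: 'a => 'c assigns every agent to its coalition (surjective: every coalition is nonempty).
   R^{n_sum} is real^'a.  R^{n_sum^2} is indexed by 'a \<times> 'a  (pair (ij,pq), ij outer).
   The edge set E :: ('a \<times> 'a) set; (pq, ij) \<in> E means ij receives from pq. *)

definition Vc :: "('a \<Rightarrow> 'c) \<Rightarrow> 'c \<Rightarrow> 'a set" where
  "Vc coal i = {a. coal a = i}"

definition ncoal :: "('a \<Rightarrow> 'c) \<Rightarrow> 'c \<Rightarrow> nat" where
  "ncoal coal i = card (Vc coal i)"

definition strongly_connected :: "'v set \<Rightarrow> ('v \<times> 'v) set \<Rightarrow> bool" where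
  "strongly_connected S E \<longleftrightarrow> (\<forall>u\<in>S. \<forall>w\<in>S. (u, w) \<in> (E \<inter> (S \<times> S))\<^sup>*)"

(* a_{ij}^{pq} with a = ij, b = pq *)
definition adj :: "('a \<times> 'a) set \<Rightarrow> 'a \<Rightarrow> 'a \<Rightarrow> real" where
  "adj E a b = (if (b, a) \<in> E \<and> b \<noteq> a then 1 else 0)"

definition deg :: "('a::finite \<times> 'a) set \<Rightarrow> 'a \<Rightarrow> real" where
  "deg E a = (\<Sum>b\<in>UNIV. adj E a b)"

definition lap :: "('a::finite \<times> 'a) set \<Rightarrow> 'a \<Rightarrow> 'a \<Rightarrow> real" where
  "lap E a b = (if a = b then deg E a else - adj E a b)"

definition Nin :: "('a \<times> 'a) set \<Rightarrow> 'a \<Rightarrow> 'a set" where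
  "Nin E a = {b. (b, a) \<in> E \<and> b \<noteq> a}"

definition Nin_i :: "('a \<Rightarrow> 'c) \<Rightarrow> ('a \<times> 'a) set \<Rightarrow> 'a \<Rightarrow> 'a set" where
  "Nin_i coal E a = {b. (b, a) \<in> E \<and> b \<noteq> a \<and> coal b = coal a}"

definition Nout_i :: "('a \<Rightarrow> 'c) \<Rightarrow> ('a \<times> 'a) set \<Rightarrow> 'a \<Rightarrow> 'a set" where
  "Nout_i coal E a = {b. (a, b) \<in> E \<and> b \<noteq> a \<and> coal b = coal a}"

(* H = Gamma (L \<otimes> I + A_d), indexed by pairs (ij,pq) *)
definition Hmat :: "('a::finite \<times> 'a) set \<Rightarrow> ('a \<times> 'a) \<Rightarrow> ('a \<times> 'a) \<Rightarrow> real" where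
  "Hmat E = (\<lambda>(a, b) (a', b').
      (if b = b' then (lap E a a' + (if a' = a then adj E a b else 0)) / (deg E a + adj E a b)
       else 0))"

definition mmul :: "'i set \<Rightarrow> ('i \<Rightarrow> 'i \<Rightarrow> real) \<Rightarrow> ('i \<Rightarrow> 'i \<Rightarrow> real) \<Rightarrow> 'i \<Rightarrow> 'i \<Rightarrow> real" where
  "mmul S A B = (\<lambda>j m. \<Sum>l\<in>S. A j l * B l m)"

definition mtr :: "('i \<Rightarrow> 'i \<Rightarrow> real) \<Rightarrow> 'i \<Rightarrow> 'i \<Rightarrow> real" where
  "mtr A = (\<lambda>j m. A m j)"

definition spec_norm :: "'i set \<Rightarrow> ('i \<Rightarrow> 'i \<Rightarrow> real) \<Rightarrow> real" where
  "spec_norm S M = (SUP x\<in>{x. (\<Sum>b\<in>S. (x b)\<^sup>2) \<le> 1}. sqrt (\<Sum>a\<in>S. (\<Sum>b\<in>S. M a b * x b)\<^sup>2))"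

definition Cbar :: "('a \<Rightarrow> 'c) \<Rightarrow> ('a \<Rightarrow> 'a \<Rightarrow> real) \<Rightarrow> ('a \<Rightarrow> real) \<Rightarrow> 'c \<Rightarrow> 'a \<Rightarrow> 'a \<Rightarrow> real" where
  "Cbar coal C v i = (\<lambda>j m. C j m - v j / real (ncoal coal i))"

definition Ibar :: "('a \<Rightarrow> 'c) \<Rightarrow> ('a \<Rightarrow> real) \<Rightarrow> 'c \<Rightarrow> 'a \<Rightarrow> 'a \<Rightarrow> real" where
  "Ibar coal v i = (\<lambda>j m. (if j = m then 1 else 0) - v j / real (ncoal coal i))"

definition pd :: "(real^'a \<Rightarrow> real) \<Rightarrow> 'a \<Rightarrow> real^'a \<Rightarrow> real" where
  "pd f l x = frechet_derivative f (at x) (axis l 1)"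

definition grad :: "(real^'a \<Rightarrow> real) \<Rightarrow> real^'a \<Rightarrow> real^'a" where
  "grad f x = (\<chi> l. pd f l x)"

definition C2 :: "(real^'a \<Rightarrow> real) \<Rightarrow> bool" where
  "C2 f \<longleftrightarrow> (\<forall>x. f differentiable (at x)) \<and>
            (\<forall>l x. (\<lambda>y. pd f l y) differentiable (at x)) \<and>
            (\<forall>l m. continuous_on UNIV (\<lambda>x. pd (\<lambda>y. pd f l y) m x))"

definition beta_psi_xi ::
  "('a::finite \<Rightarrow> 'c) \<Rightarrow> ('a \<times> 'a) set \<Rightarrow> ('a \<Rightarrow> 'a \<Rightarrow> real) \<Rightarrow> ('a \<Rightarrow> real)
    \<Rightarrow> ('c \<Rightarrow> 'a \<Rightarrow> 'a \<Rightarrow> real) \<Rightarrow> ('a \<Rightarrow> real) \<Rightarrow> real" where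
  "beta_psi_xi coal E C v Wc lip =
     2 * (MAX a\<in>UNIV.
            (2 * (spec_norm (Vc coal (coal a))
                    (mmul (Vc coal (coal a)) (mtr (Cbar coal C v (coal a)))
                       (mmul (Vc coal (coal a)) (Wc (coal a)) (Ibar coal v (coal a)))))\<^sup>2
             + spec_norm (Vc coal (coal a))
                    (mmul (Vc coal (coal a)) (mtr (Ibar coal v (coal a)))
                       (mmul (Vc coal (coal a)) (Wc (coal a)) (Ibar coal v (coal a)))))
            * (lip a)\<^sup>2)
       * (spec_norm UNIV (Hmat E))\<^sup>2"

definition beta_psi_x ::
  "('a::finite \<Rightarrow> 'c) \<Rightarrow> ('a \<times> 'a) set \<Rightarrow> ('a \<Rightarrow> 'a \<Rightarrow> real) \<Rightarrow> ('a \<Rightarrow> real)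
    \<Rightarrow> ('c \<Rightarrow> 'a \<Rightarrow> 'a \<Rightarrow> real) \<Rightarrow> ('a \<Rightarrow> real) \<Rightarrow> real" where
  "beta_psi_x coal E C v Wc lip = real CARD('a) * beta_psi_xi coal E C v Wc lip"

(* errors; psi k is the array psi_{ij}^{il}(k) given as  ps a b  (a = ij, b = il) *)
definition psibar :: "('a \<Rightarrow> 'c) \<Rightarrow> ('a \<Rightarrow> 'a \<Rightarrow> real) \<Rightarrow> 'c \<Rightarrow> 'a \<Rightarrow> real" where
  "psibar coal ps i l = (\<Sum>j\<in>Vc coal i. ps j l) / real (ncoal coal i)"

definition e_psi :: "('a \<Rightarrow> 'c) \<Rightarrow> ('a \<Rightarrow> real) \<Rightarrow> ('a \<Rightarrow> 'a \<Rightarrow> real) \<Rightarrow> 'a \<Rightarrow> 'a \<Rightarrow> real" where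
  "e_psi coal v ps a b = ps a b - v a * psibar coal ps (coal a) b"

definition sqnorm_e_psi :: "('a::finite \<Rightarrow> 'c) \<Rightarrow> ('a \<Rightarrow> real) \<Rightarrow> ('a \<Rightarrow> 'a \<Rightarrow> real) \<Rightarrow> real" where
  "sqnorm_e_psi coal v ps = (\<Sum>a\<in>UNIV. \<Sum>b\<in>Vc coal (coal a). (e_psi coal v ps a b)\<^sup>2)"

(* V_psi = sum_i e_psi_i^T (W_{c_i} \<otimes> I) e_psi_i *)
definition V_psi :: "('a \<Rightarrow> 'c::finite) \<Rightarrow> ('a \<Rightarrow> real) \<Rightarrow> ('c \<Rightarrow> 'a \<Rightarrow> 'a \<Rightarrow> real)
    \<Rightarrow> ('a \<Rightarrow> 'a \<Rightarrow> real) \<Rightarrow> real" where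
  "V_psi coal v Wc ps = (\<Sum>i\<in>UNIV. \<Sum>l\<in>Vc coal i. \<Sum>j\<in>Vc coal i. \<Sum>m\<in>Vc coal i.
        e_psi coal v ps j l * Wc i j m * e_psi coal v ps m l)"

definition xbar :: "('a \<Rightarrow> 'c) \<Rightarrow> ('a \<Rightarrow> real) \<Rightarrow> ('a \<Rightarrow> real) \<Rightarrow> 'c \<Rightarrow> real" where
  "xbar coal u xs i = (\<Sum>j\<in>Vc coal i. u j * xs j) / real (ncoal coal i)"

definition sqnorm_e_x :: "('a::finite \<Rightarrow> 'c) \<Rightarrow> ('a \<Rightarrow> real) \<Rightarrow> ('a \<Rightarrow> real) \<Rightarrow> real" where
  "sqnorm_e_x coal u xs = (\<Sum>a\<in>UNIV. (xs a - xbar coal u xs (coal a))\<^sup>2)"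

definition sqnorm_e_xi :: "('a::finite \<Rightarrow> 'c) \<Rightarrow> ('a \<Rightarrow> real) \<Rightarrow> ('a \<Rightarrow> real) \<Rightarrow> ('a \<Rightarrow> real^'a) \<Rightarrow> real" where
  "sqnorm_e_xi coal u xs xis = (\<Sum>a\<in>UNIV. \<Sum>b\<in>UNIV. (xis a $ b - xbar coal u xs (coal b))\<^sup>2)"

end

theory Submission
  imports Defs
begin


definition mv :: "'i set \<Rightarrow> ('i \<Rightarrow> 'i \<Rightarrow> real) \<Rightarrow> ('i \<Rightarrow> real) \<Rightarrow> 'i \<Rightarrow> real" where
  "mv S M z = (\<lambda>a. \<Sum>b\<in>S. M a b * z b)"

definition qf :: "'i set \<Rightarrow> ('i \<Rightarrow> 'i \<Rightarrow> real) \<Rightarrow> ('i \<Rightarrow> real) \<Rightarrow> ('i \<Rightarrow> real) \<Rightarrow> real" where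
  "qf S W z w = (\<Sum>a\<in>S. \<Sum>b\<in>S. z a * W a b * w b)"

lemma spec_bdd:
  fixes M :: "'i \<Rightarrow> 'i \<Rightarrow> real"
  assumes "finite S"
  shows "bdd_above ((\<lambda>x. sqrt (\<Sum>a\<in>S. (\<Sum>b\<in>S. M a b * x b)\<^sup>2)) ` {x. (\<Sum>b\<in>S. (x b)\<^sup>2) \<le> 1})"
proof (rule bdd_aboveI2)
  fix x :: "'i \<Rightarrow> real" assume "x \<in> {x. (\<Sum>b\<in>S. (x b)\<^sup>2) \<le> 1}"
  hence x1: "(\<Sum>b\<in>S. (x b)\<^sup>2) \<le> 1" by simp
  have xb: "\<bar>x b\<bar> \<le> 1" if "b \<in> S" for b
  proof -
    have "(x b)\<^sup>2 \<le> (\<Sum>b\<in>S. (x b)\<^sup>2)"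
      by (rule member_le_sum[OF that _ assms]) simp
    hence "(x b)\<^sup>2 \<le> 1\<^sup>2" using x1 by simp
    thus ?thesis using abs_le_square_iff[of "x b" 1] by simp
  qed
  have "(\<Sum>b\<in>S. M a b * x b)\<^sup>2 \<le> (\<Sum>b\<in>S. \<bar>M a b\<bar>)\<^sup>2" for a
  proof -
    have "\<bar>\<Sum>b\<in>S. M a b * x b\<bar> \<le> (\<Sum>b\<in>S. \<bar>M a b * x b\<bar>)" by (rule sum_abs)
    also have "\<dots> \<le> (\<Sum>b\<in>S. \<bar>M a b\<bar>)"
      by (rule sum_mono) (use xb in \<open>auto simp: abs_mult intro: mult_left_le\<close>)
    finally have "\<bar>\<Sum>b\<in>S. M a b * x b\<bar> \<le> \<bar>\<Sum>b\<in>S. \<bar>M a b\<bar>\<bar>" by simp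
    thus ?thesis using abs_le_square_iff by blast
  qed
  thus "sqrt (\<Sum>a\<in>S. (\<Sum>b\<in>S. M a b * x b)\<^sup>2) \<le> sqrt (\<Sum>a\<in>S. (\<Sum>b\<in>S. \<bar>M a b\<bar>)\<^sup>2)"
    by (intro real_sqrt_le_mono sum_mono)
qed

lemma spec_upper:
  assumes "finite S" "(\<Sum>b\<in>S. (x b)\<^sup>2) \<le> 1"
  shows "sqrt (\<Sum>a\<in>S. (mv S M x a)\<^sup>2) \<le> spec_norm S M"
  unfolding spec_norm_def mv_def
  by (rule cSUP_upper[OF _ spec_bdd[OF assms(1)]]) (use assms in simp)

lemma spec_nonneg: "finite S \<Longrightarrow> 0 \<le> spec_norm S M"
  using spec_upper[of S "\<lambda>_. 0" M] by (simp add: mv_def)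

lemma spec_bound:
  assumes fin: "finite S"
  shows "(\<Sum>a\<in>S. (mv S M x a)\<^sup>2) \<le> (spec_norm S M)\<^sup>2 * (\<Sum>b\<in>S. (x b)\<^sup>2)"
proof (cases "(\<Sum>b\<in>S. (x b)\<^sup>2) = 0")
  case True
  hence "\<forall>b\<in>S. x b = 0" using sum_nonneg_eq_0_iff[OF fin, of "\<lambda>b. (x b)\<^sup>2"] by simp
  hence "\<forall>a. mv S M x a = 0" by (simp add: mv_def)
  thus ?thesis by (simp add: sum_nonneg)
next
  case False
  define s where "s = (\<Sum>b\<in>S. (x b)\<^sup>2)"
  have s0: "s > 0" using False by (simp add: s_def less_le sum_nonneg)
  define t where "t = sqrt s"
  have t0: "t > 0" using s0 by (simp add: t_def)
  have tt: "t\<^sup>2 = s" using s0 by (simp add: t_def)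
  define y where "y = (\<lambda>b. x b / t)"
  have "(\<Sum>b\<in>S. (y b)\<^sup>2) = (\<Sum>b\<in>S. (x b)\<^sup>2) / t\<^sup>2"
    by (simp add: y_def power_divide sum_divide_distrib)
  also have "\<dots> = 1" using tt s0 s_def by simp
  finally have y1: "(\<Sum>b\<in>S. (y b)\<^sup>2) \<le> 1" by simp
  have my: "mv S M y a = mv S M x a / t" for a
    by (simp add: mv_def y_def sum_divide_distrib)
  have "(\<Sum>a\<in>S. (mv S M y a)\<^sup>2) = (\<Sum>a\<in>S. (mv S M x a)\<^sup>2) / s"
    by (simp add: my power_divide sum_divide_distrib tt)
  hence "sqrt ((\<Sum>a\<in>S. (mv S M x a)\<^sup>2) / s) \<le> spec_norm S M"
    using spec_upper[OF fin y1, of M] by simp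
  then have "(\<Sum>a\<in>S. (mv S M x a)\<^sup>2) / s \<le> (spec_norm S M)\<^sup>2"
  proof -
    have q0: "0 \<le> (\<Sum>a\<in>S. (mv S M x a)\<^sup>2) / s" using s0 by (intro divide_nonneg_pos sum_nonneg) simp_all
    assume h: "sqrt ((\<Sum>a\<in>S. (mv S M x a)\<^sup>2) / s) \<le> spec_norm S M"
    have "(sqrt ((\<Sum>a\<in>S. (mv S M x a)\<^sup>2) / s))\<^sup>2 \<le> (spec_norm S M)\<^sup>2"
      by (rule power_mono[OF h]) (simp add: q0)
    moreover have "(sqrt ((\<Sum>a\<in>S. (mv S M x a)\<^sup>2) / s))\<^sup>2 = (\<Sum>a\<in>S. (mv S M x a)\<^sup>2) / s"
      using q0 by (rule real_sqrt_pow2)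
    ultimately show ?thesis by simp
  qed
  thus ?thesis using s0 by (simp add: s_def divide_le_eq)
qed

lemma spec_diag:
  assumes fin: "finite S" and p: "p \<in> S"
  shows "\<bar>M p p\<bar> \<le> spec_norm S M"
proof -
  define x where "x = (\<lambda>b. if b = p then 1 else 0::real)"
  have xx: "(x b)\<^sup>2 = x b" for b by (simp add: x_def)
  have "(\<Sum>b\<in>S. (x b)\<^sup>2) = 1" unfolding xx using fin p by (simp add: x_def)
  hence "sqrt (\<Sum>a\<in>S. (mv S M x a)\<^sup>2) \<le> spec_norm S M" using spec_upper[OF fin] by simp
  moreover have "mv S M x a = M a p" for a using fin p by (simp add: mv_def x_def if_distrib cong: if_cong)
  moreover have "(M p p)\<^sup>2 \<le> (\<Sum>a\<in>S. (M a p)\<^sup>2)"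
    by (rule member_le_sum[OF p _ fin]) simp
  ultimately show ?thesis
    using real_sqrt_le_mono[of "(M p p)\<^sup>2" "\<Sum>a\<in>S. (M a p)\<^sup>2"] by simp
qed

lemma cs_ineq:
  "(\<Sum>a\<in>S. z a * w a) \<le> sqrt (\<Sum>a\<in>S. (z a)\<^sup>2) * sqrt (\<Sum>a\<in>S. (w a)\<^sup>2)"
proof -
  have "(\<Sum>a\<in>S. z a * w a) \<le> (\<Sum>a\<in>S. \<bar>z a\<bar> * \<bar>w a\<bar>)"
    by (rule sum_mono) (simp add: abs_mult[symmetric])
  also have "\<dots> \<le> L2_set z S * L2_set w S" by (rule L2_set_mult_ineq)
  finally show ?thesis by (simp add: L2_set_def)
qed

lemma qf_mv_right: "qf S M z w = (\<Sum>a\<in>S. z a * mv S M w a)"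
  by (simp add: qf_def mv_def sum_distrib_left mult.assoc)

lemma qf_bound:
  assumes fin: "finite S"
  shows "qf S M z w \<le> sqrt (\<Sum>a\<in>S. (z a)\<^sup>2) * spec_norm S M * sqrt (\<Sum>a\<in>S. (w a)\<^sup>2)"
proof -
  have qq: "qf S M z w \<le> sqrt (\<Sum>a\<in>S. (z a)\<^sup>2) * sqrt (\<Sum>a\<in>S. (mv S M w a)\<^sup>2)"
    unfolding qf_mv_right by (rule cs_ineq)
  moreover have "sqrt (\<Sum>a\<in>S. (mv S M w a)\<^sup>2) \<le> sqrt ((spec_norm S M)\<^sup>2 * (\<Sum>b\<in>S. (w b)\<^sup>2))"
    by (rule real_sqrt_le_mono[OF spec_bound[OF fin]])
  moreover have "sqrt ((spec_norm S M)\<^sup>2 * (\<Sum>b\<in>S. (w b)\<^sup>2)) = spec_norm S M * sqrt (\<Sum>b\<in>S. (w b)\<^sup>2)"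
    using spec_nonneg[OF fin] by (simp add: real_sqrt_mult)
  ultimately have "sqrt (\<Sum>a\<in>S. (mv S M w a)\<^sup>2) \<le> spec_norm S M * sqrt (\<Sum>b\<in>S. (w b)\<^sup>2)"
    by simp
  hence "sqrt (\<Sum>a\<in>S. (z a)\<^sup>2) * sqrt (\<Sum>a\<in>S. (mv S M w a)\<^sup>2)
     \<le> sqrt (\<Sum>a\<in>S. (z a)\<^sup>2) * (spec_norm S M * sqrt (\<Sum>b\<in>S. (w b)\<^sup>2))"
    by (rule mult_left_mono) (simp add: sum_nonneg)
  with qq show ?thesis by (simp add: mult.assoc)
qed

lemma mv_mmul: "mv S (mmul S W B) w a = mv S W (mv S B w) a"
  unfolding mv_def mmul_def
  by (simp add: sum_distrib_left sum_distrib_right mult_ac) (rule sum.swap)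

lemma qf_mvR: "qf S W z (mv S B w) = qf S (mmul S W B) z w"
  unfolding qf_mv_right by (simp add: mv_mmul)

lemma qf_tr: "qf S W z y = qf S (mtr W) y z"
  unfolding qf_def mtr_def by (subst sum.swap) (simp add: mult_ac)

lemma mmul_assoc: "mmul S (mmul S X W) B = mmul S X (mmul S W B)"
  unfolding mmul_def
  by (rule ext)+ (simp add: sum_distrib_left sum_distrib_right mult_ac, rule sum.swap)

lemma qf_mv:
  shows "qf S W (mv S A z) (mv S B w) = qf S (mmul S (mtr A) (mmul S W B)) z w"
proof -
  have "qf S W (mv S A z) (mv S B w) = qf S (mmul S W B) (mv S A z) w" by (rule qf_mvR)
  also have "\<dots> = qf S (mtr (mmul S W B)) w (mv S A z)" by (rule qf_tr)
  also have "\<dots> = qf S (mmul S (mtr (mmul S W B)) A) w z" by (rule qf_mvR)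
  also have "\<dots> = qf S (mtr (mmul S (mtr (mmul S W B)) A)) z w" by (rule qf_tr)
  also have "mtr (mmul S (mtr (mmul S W B)) A) = mmul S (mtr A) (mmul S W B)"
    by (simp add: mtr_def mmul_def mult_ac)
  finally show ?thesis .
qed

lemma qf_add:
  "qf S W (\<lambda>a. z1 a + z2 a) (\<lambda>a. w1 a + w2 a) = qf S W z1 w1 + qf S W z1 w2 + qf S W z2 w1 + qf S W z2 w2"
  by (simp add: qf_def distrib_left distrib_right sum.distrib)

lemma qf_sym:
  assumes "\<And>a b. a \<in> S \<Longrightarrow> b \<in> S \<Longrightarrow> W a b = W b a"
  shows "qf S W z w = qf S W w z"
  unfolding qf_def
  apply (subst sum.swap)
  by (intro sum.cong refl) (simp add: assms mult_ac)

lemma qf_cong: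
  assumes "\<And>a. a \<in> S \<Longrightarrow> z a = z' a" "\<And>a. a \<in> S \<Longrightarrow> w a = w' a"
    "\<And>a b. a \<in> S \<Longrightarrow> b \<in> S \<Longrightarrow> W a b = W' a b"
  shows "qf S W z w = qf S W' z' w'"
  unfolding qf_def using assms by (intro sum.cong refl) simp

lemma qf_lyap:
  assumes fin: "finite S" and "\<And>a b. a \<in> S \<Longrightarrow> b \<in> S \<Longrightarrow> X a b - W a b = - (if a = b then 1 else 0)"
  shows "qf S X e e = qf S W e e - (\<Sum>a\<in>S. (e a)\<^sup>2)"
proof -
  have "qf S X e e = qf S (\<lambda>a b. W a b - (if a = b then 1 else 0)) e e"
    by (rule qf_cong) (use assms(2) in \<open>auto simp: algebra_simps\<close>)
  also have "\<dots> = qf S W e e - (\<Sum>a\<in>S. \<Sum>b\<in>S. e a * (if a = b then 1 else 0) * e b)"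
    by (simp add: qf_def right_diff_distrib left_diff_distrib sum_subtractf)
  also have "(\<Sum>a\<in>S. \<Sum>b\<in>S. e a * (if a = b then 1 else 0) * e b) = (\<Sum>a\<in>S. (e a)\<^sup>2)"
  proof -
    have "\<And>a b. e a * (if a = b then 1 else 0) * e b = (if b = a then e a * e a else 0)" by simp
    thus ?thesis using fin by (simp add: power2_eq_square)
  qed
  finally show ?thesis .
qed

lemma step_bound:
  assumes fin: "finite S"
    and Wsym: "\<And>a b. a \<in> S \<Longrightarrow> b \<in> S \<Longrightarrow> W a b = W b a"
    and lyap: "\<And>a b. a \<in> S \<Longrightarrow> b \<in> S \<Longrightarrow> mmul S (mtr Cb) (mmul S W Cb) a b - W a b = - (if a = b then 1 else 0)"
    and upd: "\<And>a. a \<in> S \<Longrightarrow> e' a = mv S Cb e a + mv S Ib d a"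
  shows "qf S W e' e' - qf S W e e \<le> - (1/2) * (\<Sum>a\<in>S. (e a)\<^sup>2)
      + (2 * (spec_norm S (mmul S (mtr Cb) (mmul S W Ib)))\<^sup>2 + spec_norm S (mmul S (mtr Ib) (mmul S W Ib)))
        * (\<Sum>a\<in>S. (d a)\<^sup>2)"
proof -
  define sM where "sM = spec_norm S (mmul S (mtr Cb) (mmul S W Ib))"
  define sK where "sK = spec_norm S (mmul S (mtr Ib) (mmul S W Ib))"
  define ne where "ne = sqrt (\<Sum>a\<in>S. (e a)\<^sup>2)"
  define nd where "nd = sqrt (\<Sum>a\<in>S. (d a)\<^sup>2)"
  have ne2: "ne\<^sup>2 = (\<Sum>a\<in>S. (e a)\<^sup>2)" by (simp add: ne_def sum_nonneg)
  have nd2: "nd\<^sup>2 = (\<Sum>a\<in>S. (d a)\<^sup>2)" by (simp add: nd_def sum_nonneg)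
  have "qf S W e' e' = qf S W (\<lambda>a. mv S Cb e a + mv S Ib d a) (\<lambda>a. mv S Cb e a + mv S Ib d a)"
    by (rule qf_cong) (simp_all add: upd)
  also have "\<dots> = qf S W (mv S Cb e) (mv S Cb e) + 2 * qf S W (mv S Cb e) (mv S Ib d)
       + qf S W (mv S Ib d) (mv S Ib d)"
    unfolding qf_add using qf_sym[OF Wsym, where z="mv S Ib d" and w="mv S Cb e"] by simp
  also have "\<dots> = qf S W e e - ne\<^sup>2 + 2 * qf S (mmul S (mtr Cb) (mmul S W Ib)) e d
       + qf S (mmul S (mtr Ib) (mmul S W Ib)) d d"
    unfolding qf_mv using qf_lyap[OF fin lyap, of e] ne2 by simp
  finally have eq: "qf S W e' e' - qf S W e e = - ne\<^sup>2 + 2 * qf S (mmul S (mtr Cb) (mmul S W Ib)) e d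
       + qf S (mmul S (mtr Ib) (mmul S W Ib)) d d" by simp
  have b1: "qf S (mmul S (mtr Cb) (mmul S W Ib)) e d \<le> ne * sM * nd"
    unfolding ne_def sM_def nd_def by (rule qf_bound[OF fin])
  have b2: "qf S (mmul S (mtr Ib) (mmul S W Ib)) d d \<le> nd * sK * nd"
    unfolding sK_def nd_def by (rule qf_bound[OF fin])
  have b3: "2 * (ne * sM * nd) \<le> (1/2) * ne\<^sup>2 + 2 * sM\<^sup>2 * nd\<^sup>2"
  proof -
    have "0 \<le> (1/2) * (ne - 2 * sM * nd)\<^sup>2" by simp
    thus ?thesis by (simp add: power2_eq_square algebra_simps)
  qed
  have "qf S W e' e' - qf S W e e \<le> - (1/2) * ne\<^sup>2 + (2 * sM\<^sup>2 + sK) * nd\<^sup>2"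
    unfolding eq using b1 b2 b3 by (simp add: power2_eq_square algebra_simps)
  thus ?thesis unfolding ne2 nd2 sM_def sK_def .
qed



lemma sum_part:
  fixes coal :: "'a::finite \<Rightarrow> 'c::finite"
  shows "(\<Sum>i\<in>UNIV. \<Sum>j\<in>Vc coal i. g j) = (\<Sum>j\<in>UNIV. g j)"
proof -
  have "(\<Sum>i\<in>UNIV. sum g {x \<in> UNIV. coal x = i}) = sum g UNIV"
    by (rule sum.group) auto
  thus ?thesis by (simp add: Vc_def)
qed

lemma vec_norm2: "(norm (w::real^'n))\<^sup>2 = (\<Sum>i\<in>UNIV. (w$i)\<^sup>2)"
  unfolding norm_vec_def L2_set_def by (simp add: sum_nonneg)

lemma grad_diff:
  fixes f :: "real^'a::finite \<Rightarrow> real"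
  assumes "lipschitz_on L UNIV (grad f)"
  shows "(\<Sum>l\<in>T. (pd f l y - pd f l z)\<^sup>2) \<le> L\<^sup>2 * (\<Sum>b\<in>UNIV. (y$b - z$b)\<^sup>2)"
proof -
  have "(\<Sum>l\<in>T. (pd f l y - pd f l z)\<^sup>2) \<le> (\<Sum>l\<in>UNIV. (pd f l y - pd f l z)\<^sup>2)"
    by (rule sum_mono2) auto
  also have "\<dots> = (norm (grad f y - grad f z))\<^sup>2"
    unfolding vec_norm2 by (simp add: grad_def)
  also have "\<dots> \<le> (L * norm (y - z))\<^sup>2"
    using lipschitz_onD[OF assms, of y z] by (intro power_mono) (auto simp: dist_norm)
  also have "\<dots> = L\<^sup>2 * (\<Sum>b\<in>UNIV. (y$b - z$b)\<^sup>2)"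
    by (simp add: power_mult_distrib vec_norm2)
  finally show ?thesis .
qed

lemma psi_upd:
  fixes coal :: "'a \<Rightarrow> 'c" and C :: "'a \<Rightarrow> 'a \<Rightarrow> real"
    and \<psi>0 \<psi>1 :: "'a \<Rightarrow> 'a \<Rightarrow> real" and Dl v :: "'a \<Rightarrow> real" and i :: 'c
  defines "S \<equiv> Vc coal i"
  assumes fin: "finite S" and npos: "ncoal coal i > 0"
    and Csum: "\<And>m. m \<in> S \<Longrightarrow> (\<Sum>j\<in>S. C j m) = 1"
    and vr: "\<And>j. j \<in> S \<Longrightarrow> (\<Sum>m\<in>S. C j m * v m) = v j"
    and vs: "(\<Sum>j\<in>S. v j) = real (ncoal coal i)"
    and step: "\<And>j. j \<in> S \<Longrightarrow> \<psi>1 j l = (\<Sum>m\<in>S. C j m * \<psi>0 m l) + Dl j"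
    and j: "j \<in> S"
  shows "e_psi coal v \<psi>1 j l = mv S (Cbar coal C v i) (\<lambda>m. e_psi coal v \<psi>0 m l) j + mv S (Ibar coal v i) Dl j"
proof -
  define n where "n = real (ncoal coal i)"
  have n0: "n > 0" using npos by (simp add: n_def)
  have cj: "coal j = i" using j by (simp add: S_def Vc_def)
  have cm: "\<And>m. m \<in> S \<Longrightarrow> coal m = i" by (simp add: S_def Vc_def)
  define pb0 where "pb0 = psibar coal \<psi>0 i l"
  define pb1 where "pb1 = psibar coal \<psi>1 i l"
  define sD where "sD = (\<Sum>m\<in>S. Dl m)"
  have sp0: "(\<Sum>m\<in>S. \<psi>0 m l) = n * pb0" using n0 by (simp add: pb0_def psibar_def S_def n_def)
  have "(\<Sum>j\<in>S. \<psi>1 j l) = (\<Sum>j\<in>S. \<Sum>m\<in>S. C j m * \<psi>0 m l) + sD"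
    by (simp add: step sum.distrib sD_def)
  also have "(\<Sum>j\<in>S. \<Sum>m\<in>S. C j m * \<psi>0 m l) = (\<Sum>m\<in>S. (\<Sum>j\<in>S. C j m) * \<psi>0 m l)"
    by (subst sum.swap) (simp add: sum_distrib_right)
  also have "\<dots> = (\<Sum>m\<in>S. \<psi>0 m l)" by (simp add: Csum)
  finally have "(\<Sum>j\<in>S. \<psi>1 j l) = n * pb0 + sD" using sp0 by simp
  hence pb1: "pb1 = pb0 + sD / n" using n0
    by (simp add: pb1_def psibar_def S_def[symmetric] n_def[symmetric] field_simps)
  have e0: "\<And>m. m \<in> S \<Longrightarrow> e_psi coal v \<psi>0 m l = \<psi>0 m l - v m * pb0"
    by (simp add: e_psi_def cm pb0_def)
  have "mv S (Cbar coal C v i) (\<lambda>m. e_psi coal v \<psi>0 m l) j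
      = (\<Sum>m\<in>S. (C j m - v j / n) * (\<psi>0 m l - v m * pb0))"
    unfolding mv_def Cbar_def n_def by (rule sum.cong) (simp_all add: e0)
  also have "\<dots> = (\<Sum>m\<in>S. C j m * \<psi>0 m l) - pb0 * (\<Sum>m\<in>S. C j m * v m)
      - v j / n * (\<Sum>m\<in>S. \<psi>0 m l) + v j / n * pb0 * (\<Sum>m\<in>S. v m)"
    by (simp add: algebra_simps sum.distrib sum_subtractf sum_distrib_left sum_divide_distrib)
  also have "\<dots> = (\<Sum>m\<in>S. C j m * \<psi>0 m l) - v j * pb0"
    using n0 by (simp add: vr[OF j] sp0 vs n_def[symmetric])
  finally have h3: "mv S (Cbar coal C v i) (\<lambda>m. e_psi coal v \<psi>0 m l) j = (\<Sum>m\<in>S. C j m * \<psi>0 m l) - v j * pb0" .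
  have "mv S (Ibar coal v i) Dl j = (\<Sum>m\<in>S. (if j = m then Dl m else 0) - v j / n * Dl m)"
    unfolding mv_def Ibar_def n_def by (rule sum.cong) (simp_all add: algebra_simps)
  also have "\<dots> = Dl j - v j * sD / n"
    using fin j by (simp add: sum_subtractf sum_distrib_left[symmetric] sum_divide_distrib[symmetric] sD_def)
  finally have h4: "mv S (Ibar coal v i) Dl j = Dl j - v j * sD / n" .
  show ?thesis
    unfolding h3 h4 using j
    by (simp add: e_psi_def cj pb1_def[symmetric] pb1 step algebra_simps)
qed



lemma adj_01: "adj E a b = 0 \<or> adj E a b = 1" by (simp add: adj_def)
lemma adj_nn: "0 \<le> adj E a b" by (simp add: adj_def)
lemma adj_self: "adj E a a = 0" by (simp add: adj_def)
lemma deg_nn: "0 \<le> deg E a" by (simp add: deg_def sum_nonneg adj_nn)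

lemma nin_sum:
  fixes E :: "('a::finite \<times> 'a) set"
  shows "(\<Sum>c\<in>Nin E a. g c) = (\<Sum>c\<in>UNIV. adj E a c * g c)"
proof -
  have "(\<Sum>c\<in>UNIV. adj E a c * g c) = (\<Sum>c\<in>UNIV. if c \<in> Nin E a then g c else 0)"
    by (rule sum.cong) (auto simp: adj_def Nin_def)
  also have "\<dots> = (\<Sum>c\<in>UNIV \<inter> Nin E a. g c)" by (rule sum.inter_restrict[symmetric]) simp
  finally show ?thesis by simp
qed

lemma lap_sum:
  fixes E :: "('a::finite \<times> 'a) set"
  shows "(\<Sum>c\<in>UNIV. lap E a c * g c) = (\<Sum>c\<in>UNIV. adj E a c * (g a - g c))"
proof -
  have "(\<Sum>c\<in>UNIV. lap E a c * g c) = (\<Sum>c\<in>UNIV. (if a = c then deg E a * g c else 0) - adj E a c * g c)"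
    by (rule sum.cong) (auto simp: lap_def adj_self)
  also have "\<dots> = deg E a * g a - (\<Sum>c\<in>UNIV. adj E a c * g c)"
    by (simp add: sum_subtractf)
  also have "\<dots> = (\<Sum>c\<in>UNIV. adj E a c * (g a - g c))"
    by (simp add: deg_def sum_distrib_right sum_distrib_left right_diff_distrib sum_subtractf mult_ac)
  finally show ?thesis .
qed

lemma sum_pairs:
  "(\<Sum>p\<in>(UNIV::('a::finite \<times> 'b::finite) set). g p) = (\<Sum>a\<in>UNIV. \<Sum>b\<in>UNIV. g (a, b))"
  by (simp add: sum.cartesian_product UNIV_Times_UNIV)

lemma mvH:
  fixes E :: "('a::finite \<times> 'a) set"
  shows "mv UNIV (Hmat E) eX (a, b) = ((\<Sum>c\<in>UNIV. lap E a c * eX (c, b)) + adj E a b * eX (a, b)) / (deg E a + adj E a b)"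
proof -
  have "mv UNIV (Hmat E) eX (a, b) = (\<Sum>c\<in>UNIV. \<Sum>d\<in>UNIV. Hmat E (a, b) (c, d) * eX (c, d))"
    unfolding mv_def by (rule sum_pairs)
  also have "\<dots> = (\<Sum>c\<in>UNIV. (lap E a c + (if c = a then adj E a b else 0)) / (deg E a + adj E a b) * eX (c, b))"
  proof -
    have "\<And>c d. Hmat E (a,b) (c,d) * eX (c,d) = (if d = b then ((lap E a c + (if c = a then adj E a b else 0)) / (deg E a + adj E a b) * eX (c, b)) else 0)"
      by (auto simp: Hmat_def)
    thus ?thesis by simp
  qed
  also have "\<dots> = ((\<Sum>c\<in>UNIV. lap E a c * eX (c, b)) + adj E a b * eX (a, b)) / (deg E a + adj E a b)"
  proof -
    have "\<And>c. (lap E a c + (if c = a then adj E a b else 0)) / (deg E a + adj E a b) * eX (c, b)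
        = lap E a c * eX (c, b) / (deg E a + adj E a b) + (if c = a then adj E a b * eX (a, b) / (deg E a + adj E a b) else 0)"
      by (auto simp: field_simps add_divide_distrib)
    thus ?thesis by (simp add: sum.distrib sum_divide_distrib[symmetric] add_divide_distrib)
  qed
  finally show ?thesis .
qed

lemma xi_bound:
  fixes coal :: "'a::finite \<Rightarrow> 'c" and E :: "('a \<times> 'a) set"
    and \<xi>0 \<xi>1 :: "'a \<Rightarrow> real^'a" and x0 u :: "'a \<Rightarrow> real"
  assumes step: "\<And>a b. \<xi>1 a $ b = \<xi>0 a $ b - 1 / (deg E a + adj E a b) *
          ((\<Sum>c\<in>Nin E a. \<xi>0 a $ b - \<xi>0 c $ b) + adj E a b * (\<xi>0 a $ b - x0 b))"
  shows "(\<Sum>a\<in>UNIV. \<Sum>b\<in>UNIV. (\<xi>1 a $ b - \<xi>0 a $ b)\<^sup>2)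
     \<le> 2 * (spec_norm UNIV (Hmat E))\<^sup>2 * sqnorm_e_xi coal u x0 \<xi>0
       + 2 * real CARD('a) * (spec_norm UNIV (Hmat E))\<^sup>2 * sqnorm_e_x coal u x0"
proof -
  define eX where "eX = (\<lambda>p. \<xi>0 (fst p) $ snd p - xbar coal u x0 (coal (snd p)))"
  define ex where "ex = (\<lambda>b. x0 b - xbar coal u x0 (coal b))"
  define cf where "cf = (\<lambda>a b. adj E a b / (deg E a + adj E a b))"
  define h where "h = spec_norm UNIV (Hmat E)"
  have diff: "\<xi>1 a $ b - \<xi>0 a $ b = - mv UNIV (Hmat E) eX (a, b) + cf a b * ex b" for a b
  proof -
    have "(\<Sum>c\<in>Nin E a. \<xi>0 a $ b - \<xi>0 c $ b) = (\<Sum>c\<in>UNIV. adj E a c * (eX (a, b) - eX (c, b)))"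
      unfolding nin_sum by (simp add: eX_def)
    also have "\<dots> = (\<Sum>c\<in>UNIV. lap E a c * eX (c, b))"
      by (rule lap_sum[symmetric])
    finally have n1: "(\<Sum>c\<in>Nin E a. \<xi>0 a $ b - \<xi>0 c $ b) = (\<Sum>c\<in>UNIV. lap E a c * eX (c, b))" .
    have n2: "\<xi>0 a $ b - x0 b = eX (a, b) - ex b" by (simp add: eX_def ex_def)
    show ?thesis
      unfolding step n1 n2 mvH cf_def
      by (simp add: field_simps add_divide_distrib diff_divide_distrib)
  qed
  have sq: "(- y + z)\<^sup>2 \<le> 2 * y\<^sup>2 + 2 * z\<^sup>2" for y z :: real
  proof -
    have "0 \<le> (y + z)\<^sup>2" by simp
    thus ?thesis by (simp add: power2_eq_square algebra_simps)
  qed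
  have "(\<Sum>a\<in>UNIV. \<Sum>b\<in>UNIV. (\<xi>1 a $ b - \<xi>0 a $ b)\<^sup>2)
     \<le> (\<Sum>a\<in>UNIV. \<Sum>b\<in>UNIV. 2 * (mv UNIV (Hmat E) eX (a, b))\<^sup>2 + 2 * (cf a b * ex b)\<^sup>2)"
    unfolding diff by (intro sum_mono sq)
  also have "\<dots> = 2 * (\<Sum>p\<in>UNIV. (mv UNIV (Hmat E) eX p)\<^sup>2) + 2 * (\<Sum>a\<in>UNIV. \<Sum>b\<in>UNIV. (cf a b * ex b)\<^sup>2)"
    by (simp add: sum_pairs sum.distrib sum_distrib_left)
  finally have b0: "(\<Sum>a\<in>UNIV. \<Sum>b\<in>UNIV. (\<xi>1 a $ b - \<xi>0 a $ b)\<^sup>2)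
     \<le> 2 * (\<Sum>p\<in>UNIV. (mv UNIV (Hmat E) eX p)\<^sup>2) + 2 * (\<Sum>a\<in>UNIV. \<Sum>b\<in>UNIV. (cf a b * ex b)\<^sup>2)" .
  have "(\<Sum>p\<in>UNIV. (mv UNIV (Hmat E) eX p)\<^sup>2) \<le> h\<^sup>2 * (\<Sum>p\<in>UNIV. (eX p)\<^sup>2)"
    unfolding h_def by (rule spec_bound) simp
  also have "(\<Sum>p\<in>UNIV. (eX p)\<^sup>2) = sqnorm_e_xi coal u x0 \<xi>0"
    by (simp add: sum_pairs sqnorm_e_xi_def eX_def)
  finally have b1: "(\<Sum>p\<in>UNIV. (mv UNIV (Hmat E) eX p)\<^sup>2) \<le> h\<^sup>2 * sqnorm_e_xi coal u x0 \<xi>0" .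
  have exs: "sqnorm_e_x coal u x0 = (\<Sum>b\<in>UNIV. (ex b)\<^sup>2)" by (simp add: sqnorm_e_x_def ex_def)
  have b2: "(\<Sum>a\<in>UNIV. \<Sum>b\<in>UNIV. (cf a b * ex b)\<^sup>2) \<le> real CARD('a) * h\<^sup>2 * sqnorm_e_x coal u x0"
  proof (cases "\<forall>a b. adj E a b = 0")
    case True
    hence "\<And>a b. cf a b = 0" by (simp add: cf_def)
    thus ?thesis by (simp add: exs sum_nonneg)
  next
    case False
    then obtain a0 b0 where ab: "adj E a0 b0 \<noteq> 0" by blast
    hence a1: "adj E a0 b0 = 1" using adj_01[of E a0 b0] by simp
    have "adj E a0 b0 \<le> deg E a0" unfolding deg_def
      by (rule member_le_sum) (simp_all add: adj_nn)
    hence dpos: "deg E a0 + adj E a0 b0 > 0" using a1 by simp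
    have "Hmat E (a0, b0) (a0, b0) = 1"
      using dpos by (simp add: Hmat_def lap_def)
    hence h1: "1 \<le> h" using spec_diag[of UNIV "(a0, b0)" "Hmat E"] by (simp add: h_def)
    hence h2: "1 \<le> h\<^sup>2" by (simp add: one_le_power)
    have cf1: "(cf a b)\<^sup>2 \<le> h\<^sup>2" for a b
    proof -
      have c0: "0 \<le> cf a b" by (simp add: cf_def adj_nn deg_nn)
      have "cf a b \<le> 1" unfolding cf_def
        using deg_nn[of E a] adj_nn[of E a b]
        by (cases "deg E a + adj E a b = 0") (simp_all add: divide_le_eq_1)
      hence "(cf a b)\<^sup>2 \<le> 1" using c0 by (simp add: power_le_one)
      thus ?thesis using h2 by simp
    qed
    have "(\<Sum>a\<in>UNIV. \<Sum>b\<in>UNIV. (cf a b * ex b)\<^sup>2) \<le> (\<Sum>a\<in>(UNIV::'a set). \<Sum>b\<in>UNIV. h\<^sup>2 * (ex b)\<^sup>2)"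
      by (intro sum_mono) (simp add: power_mult_distrib mult_right_mono cf1)
    also have "\<dots> = real CARD('a) * h\<^sup>2 * sqnorm_e_x coal u x0"
      by (simp add: exs sum_distrib_left mult.assoc)
    finally show ?thesis .
  qed
  show ?thesis using b0 b1 b2 unfolding h_def by simp
qed


theorem lemma1:
  fixes coal :: "'a::finite \<Rightarrow> 'c::finite"
    and E :: "('a \<times> 'a) set"
    and f :: "'a \<Rightarrow> real^'a \<Rightarrow> real"
    and lip :: "'a \<Rightarrow> real"
    and R C :: "'a \<Rightarrow> 'a \<Rightarrow> real"
    and u v :: "'a \<Rightarrow> real"
    and Wc :: "'c \<Rightarrow> 'a \<Rightarrow> 'a \<Rightarrow> real"
    and \<alpha> :: real
    and x :: "nat \<Rightarrow> 'a \<Rightarrow> real"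
    and \<xi> :: "nat \<Rightarrow> 'a \<Rightarrow> real^'a"
    and \<psi> :: "nat \<Rightarrow> 'a \<Rightarrow> 'a \<Rightarrow> real"
  assumes coal_surj: "surj coal"
    \<comment> \<open>(A1)\<close>
    and A1_G: "strongly_connected UNIV E"
    and A1_Gi: "\<And>i. strongly_connected (Vc coal i) E"
    \<comment> \<open>(A2)\<close>
    and A2_convex: "\<And>a. convex_on UNIV (f a)"
    and A2_C2: "\<And>a. C2 (f a)"
    and A2_lip: "\<And>a. lipschitz_on (lip a) UNIV (grad (f a))"
    \<comment> \<open>weights\<close>
    and R_pos: "\<And>a b. coal b = coal a \<Longrightarrow> b \<in> Nin_i coal E a \<union> {a} \<Longrightarrow> R a b > 0"
    and R_zero: "\<And>a b. coal b = coal a \<Longrightarrow> b \<notin> Nin_i coal E a \<union> {a} \<Longrightarrow> R a b = 0"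
    and R_sum: "\<And>a. (\<Sum>b\<in>Vc coal (coal a). R a b) = 1"
    and C_pos: "\<And>a b. coal b = coal a \<Longrightarrow> b \<in> Nout_i coal E a \<union> {a} \<Longrightarrow> C b a > 0"
    and C_zero: "\<And>a b. coal b = coal a \<Longrightarrow> b \<notin> Nout_i coal E a \<union> {a} \<Longrightarrow> C b a = 0"
    and C_sum: "\<And>a. (\<Sum>b\<in>Vc coal (coal a). C b a) = 1"
    and alpha_pos: "\<alpha> > 0"
    \<comment> \<open>auxiliary vectors u_i, v_i\<close>
    and u_left: "\<And>i m. coal m = i \<Longrightarrow> (\<Sum>j\<in>Vc coal i. u j * R j m) = u m"
    and u_sum: "\<And>i. (\<Sum>j\<in>Vc coal i. u j) = real (ncoal coal i)"
    and v_right: "\<And>i j. coal j = i \<Longrightarrow> (\<Sum>m\<in>Vc coal i. C j m * v m) = v j"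
    and v_sum: "\<And>i. (\<Sum>j\<in>Vc coal i. v j) = real (ncoal coal i)"
    \<comment> \<open>W_{c_i}: symmetric positive definite solution of the Lyapunov equation\<close>
    and Wc_sym: "\<And>i j m. j \<in> Vc coal i \<Longrightarrow> m \<in> Vc coal i \<Longrightarrow> Wc i j m = Wc i m j"
    and Wc_pd: "\<And>i z. (\<exists>j\<in>Vc coal i. z j \<noteq> 0) \<Longrightarrow>
                   (\<Sum>j\<in>Vc coal i. \<Sum>m\<in>Vc coal i. z j * Wc i j m * z m) > 0"
    and Wc_lyap: "\<And>i j m. j \<in> Vc coal i \<Longrightarrow> m \<in> Vc coal i \<Longrightarrow>
        mmul (Vc coal i) (mtr (Cbar coal C v i)) (mmul (Vc coal i) (Wc i) (Cbar coal C v i)) j m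
          - Wc i j m = - (if j = m then 1 else 0)"
    \<comment> \<open>algorithm\<close>
    and psi_init: "\<And>a l. coal l = coal a \<Longrightarrow> \<psi> 0 a l = pd (f a) l (\<xi> 0 a)"
    and x_step: "\<And>k a. x (Suc k) a =
        (\<Sum>m\<in>Vc coal (coal a). R a m * x k m)
          - \<alpha> / real (ncoal coal (coal a)) * (\<Sum>m\<in>Vc coal (coal a). \<psi> k a m)"
    and xi_step: "\<And>k a b. \<xi> (Suc k) a $ b =
        \<xi> k a $ b - 1 / (deg E a + adj E a b) *
          ((\<Sum>c\<in>Nin E a. \<xi> k a $ b - \<xi> k c $ b) + adj E a b * (\<xi> k a $ b - x k b))"
    and psi_step: "\<And>k a l. coal l = coal a \<Longrightarrow> \<psi> (Suc k) a l =
        (\<Sum>m\<in>Vc coal (coal a). C a m * \<psi> k m l)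
          + pd (f a) l (\<xi> (Suc k) a) - pd (f a) l (\<xi> k a)"
  shows "\<forall>k. V_psi coal v Wc (\<psi> (Suc k)) - V_psi coal v Wc (\<psi> k)
           \<le> - (1/2) * sqnorm_e_psi coal v (\<psi> k)
             + beta_psi_xi coal E C v Wc lip * sqnorm_e_xi coal u (x k) (\<xi> k)
             + beta_psi_x coal E C v Wc lip * sqnorm_e_x coal u (x k)"
proof
  fix k
  have finS: "\<And>i. finite (Vc coal i)" by simp
  have npos: "\<And>i. ncoal coal i > 0"
  proof -
    fix i
    obtain a where "coal a = i" using coal_surj by (metis surjD)
    hence "a \<in> Vc coal i" by (simp add: Vc_def)
    thus "ncoal coal i > 0" unfolding ncoal_def using finS[of i] card_gt_0_iff by blast
  qed
  have ci: "\<And>i j. j \<in> Vc coal i \<Longrightarrow> coal j = i" by (simp add: Vc_def)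
  define D where "D = (\<lambda>j l. pd (f j) l (\<xi> (Suc k) j) - pd (f j) l (\<xi> k j))"
  define cst where "cst = (\<lambda>i. 2 * (spec_norm (Vc coal i) (mmul (Vc coal i) (mtr (Cbar coal C v i)) (mmul (Vc coal i) (Wc i) (Ibar coal v i))))\<^sup>2
      + spec_norm (Vc coal i) (mmul (Vc coal i) (mtr (Ibar coal v i)) (mmul (Vc coal i) (Wc i) (Ibar coal v i))))"
  define g where "g = (\<lambda>a. cst (coal a) * (lip a)\<^sup>2)"
  define Mx where "Mx = (MAX a\<in>UNIV. g a)"
  define h where "h = spec_norm UNIV (Hmat E)"
  have beta: "beta_psi_xi coal E C v Wc lip = 2 * Mx * h\<^sup>2"
    by (simp add: beta_psi_xi_def Mx_def g_def cst_def h_def)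
  have gle: "\<And>a. g a \<le> Mx" unfolding Mx_def by (rule Max_ge) simp_all
  have cst_nn: "\<And>i. 0 \<le> cst i" unfolding cst_def
    by (intro add_nonneg_nonneg mult_nonneg_nonneg spec_nonneg finS) simp_all
  obtain a0 :: 'a where True by simp
  have Mx_nn: "0 \<le> Mx" using gle[of a0] cst_nn[of "coal a0"] unfolding g_def
    using mult_nonneg_nonneg[OF cst_nn[of "coal a0"] zero_le_power2[of "lip a0"]] by linarith
  define dx where "dx = (\<lambda>j. \<Sum>b\<in>UNIV. (\<xi> (Suc k) j $ b - \<xi> k j $ b)\<^sup>2)"
  have dx_nn: "\<And>j. 0 \<le> dx j" by (simp add: dx_def sum_nonneg)
  define eP where "eP = (\<lambda>k' j l. e_psi coal v (\<psi> k') j l)"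
  have stepil: "qf (Vc coal i) (Wc i) (\<lambda>j. eP (Suc k) j l) (\<lambda>j. eP (Suc k) j l)
      - qf (Vc coal i) (Wc i) (\<lambda>j. eP k j l) (\<lambda>j. eP k j l)
      \<le> - (1/2) * (\<Sum>j\<in>Vc coal i. (eP k j l)\<^sup>2) + cst i * (\<Sum>j\<in>Vc coal i. (D j l)\<^sup>2)"
    if l: "l \<in> Vc coal i" for i l
    unfolding cst_def
  proof (rule step_bound[OF finS])
    show "\<And>a b. a \<in> Vc coal i \<Longrightarrow> b \<in> Vc coal i \<Longrightarrow> Wc i a b = Wc i b a" by (rule Wc_sym)
    show "\<And>a b. a \<in> Vc coal i \<Longrightarrow> b \<in> Vc coal i \<Longrightarrow> mmul (Vc coal i) (mtr (Cbar coal C v i)) (mmul (Vc coal i) (Wc i) (Cbar coal C v i)) a b - Wc i a b = - (if a = b then 1 else 0)"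
      by (rule Wc_lyap)
    fix j assume j: "j \<in> Vc coal i"
    show "eP (Suc k) j l = mv (Vc coal i) (Cbar coal C v i) (\<lambda>j. eP k j l) j + mv (Vc coal i) (Ibar coal v i) (\<lambda>j. D j l) j"
      unfolding eP_def
    proof (rule psi_upd[OF finS npos _ _ v_sum _ j])
      show "\<And>m. m \<in> Vc coal i \<Longrightarrow> (\<Sum>j\<in>Vc coal i. C j m) = 1"
      proof -
        fix m assume "m \<in> Vc coal i"
        thus "(\<Sum>j\<in>Vc coal i. C j m) = 1" using C_sum[of m] ci by simp
      qed
      show "\<And>j. j \<in> Vc coal i \<Longrightarrow> (\<Sum>m\<in>Vc coal i. C j m * v m) = v j"
      proof -
        fix j assume "j \<in> Vc coal i"
        thus "(\<Sum>m\<in>Vc coal i. C j m * v m) = v j" using v_right[of j i] ci by simp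
      qed
      show "\<And>j. j \<in> Vc coal i \<Longrightarrow> \<psi> (Suc k) j l = (\<Sum>m\<in>Vc coal i. C j m * \<psi> k m l) + D j l"
      proof -
        fix j assume j: "j \<in> Vc coal i"
        have "coal l = coal j" using ci[OF j] ci[OF l] by simp
        thus "\<psi> (Suc k) j l = (\<Sum>m\<in>Vc coal i. C j m * \<psi> k m l) + D j l"
          using psi_step[of l j k] ci[OF j] by (simp add: D_def)
      qed
    qed
  qed
  have Dlip: "(\<Sum>l\<in>Vc coal i. (D j l)\<^sup>2) \<le> (lip j)\<^sup>2 * dx j" for i j
    unfolding D_def dx_def by (rule grad_diff[OF A2_lip])
  have per_i: "(\<Sum>l\<in>Vc coal i. qf (Vc coal i) (Wc i) (\<lambda>j. eP (Suc k) j l) (\<lambda>j. eP (Suc k) j l)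
      - qf (Vc coal i) (Wc i) (\<lambda>j. eP k j l) (\<lambda>j. eP k j l))
      \<le> - (1/2) * (\<Sum>j\<in>Vc coal i. \<Sum>l\<in>Vc coal i. (eP k j l)\<^sup>2) + Mx * (\<Sum>j\<in>Vc coal i. dx j)" for i
  proof -
    have "(\<Sum>l\<in>Vc coal i. qf (Vc coal i) (Wc i) (\<lambda>j. eP (Suc k) j l) (\<lambda>j. eP (Suc k) j l)
      - qf (Vc coal i) (Wc i) (\<lambda>j. eP k j l) (\<lambda>j. eP k j l))
      \<le> (\<Sum>l\<in>Vc coal i. - (1/2) * (\<Sum>j\<in>Vc coal i. (eP k j l)\<^sup>2) + cst i * (\<Sum>j\<in>Vc coal i. (D j l)\<^sup>2))"
      by (rule sum_mono) (rule stepil)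
    also have "\<dots> = - (1/2) * (\<Sum>l\<in>Vc coal i. \<Sum>j\<in>Vc coal i. (eP k j l)\<^sup>2) + cst i * (\<Sum>l\<in>Vc coal i. \<Sum>j\<in>Vc coal i. (D j l)\<^sup>2)"
      by (simp add: sum.distrib sum_distrib_left)
    also have "(\<Sum>l\<in>Vc coal i. \<Sum>j\<in>Vc coal i. (D j l)\<^sup>2) = (\<Sum>j\<in>Vc coal i. \<Sum>l\<in>Vc coal i. (D j l)\<^sup>2)"
      by (rule sum.swap)
    also have "cst i * (\<Sum>j\<in>Vc coal i. \<Sum>l\<in>Vc coal i. (D j l)\<^sup>2) = (\<Sum>j\<in>Vc coal i. cst i * (\<Sum>l\<in>Vc coal i. (D j l)\<^sup>2))"
      by (rule sum_distrib_left)
    also have "(\<Sum>l\<in>Vc coal i. \<Sum>j\<in>Vc coal i. (eP k j l)\<^sup>2) = (\<Sum>j\<in>Vc coal i. \<Sum>l\<in>Vc coal i. (eP k j l)\<^sup>2)"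
      by (rule sum.swap)
    also have "(\<Sum>j\<in>Vc coal i. cst i * (\<Sum>l\<in>Vc coal i. (D j l)\<^sup>2)) \<le> (\<Sum>j\<in>Vc coal i. Mx * dx j)"
    proof (rule sum_mono)
      fix j assume j: "j \<in> Vc coal i"
      have "cst i * (\<Sum>l\<in>Vc coal i. (D j l)\<^sup>2) \<le> cst i * ((lip j)\<^sup>2 * dx j)"
        by (rule mult_left_mono[OF Dlip cst_nn])
      also have "\<dots> = g j * dx j" using ci[OF j] by (simp add: g_def)
      also have "\<dots> \<le> Mx * dx j" by (rule mult_right_mono[OF gle dx_nn])
      finally show "cst i * (\<Sum>l\<in>Vc coal i. (D j l)\<^sup>2) \<le> Mx * dx j" .
    qed
    finally show ?thesis by (simp add: sum_distrib_left)
  qed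
  have Veq: "V_psi coal v Wc (\<psi> k') = (\<Sum>i\<in>UNIV. \<Sum>l\<in>Vc coal i. qf (Vc coal i) (Wc i) (\<lambda>j. eP k' j l) (\<lambda>j. eP k' j l))" for k'
    by (simp add: V_psi_def qf_def eP_def)
  have Seq: "sqnorm_e_psi coal v (\<psi> k) = (\<Sum>i\<in>UNIV. \<Sum>j\<in>Vc coal i. \<Sum>l\<in>Vc coal i. (eP k j l)\<^sup>2)"
  proof -
    have "sqnorm_e_psi coal v (\<psi> k) = (\<Sum>i\<in>UNIV. \<Sum>j\<in>Vc coal i. \<Sum>l\<in>Vc coal (coal j). (eP k j l)\<^sup>2)"
      unfolding sqnorm_e_psi_def eP_def by (rule sum_part[symmetric])
    also have "\<dots> = (\<Sum>i\<in>UNIV. \<Sum>j\<in>Vc coal i. \<Sum>l\<in>Vc coal i. (eP k j l)\<^sup>2)"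
      by (intro sum.cong refl) (simp add: ci)
    finally show ?thesis .
  qed
  have dxeq: "(\<Sum>i\<in>UNIV. \<Sum>j\<in>Vc coal i. dx j) = (\<Sum>j\<in>UNIV. dx j)" by (rule sum_part)
  have xib: "(\<Sum>j\<in>UNIV. dx j) \<le> 2 * h\<^sup>2 * sqnorm_e_xi coal u (x k) (\<xi> k)
       + 2 * real CARD('a) * h\<^sup>2 * sqnorm_e_x coal u (x k)"
    unfolding dx_def h_def by (rule xi_bound[OF xi_step])
  have "V_psi coal v Wc (\<psi> (Suc k)) - V_psi coal v Wc (\<psi> k)
      = (\<Sum>i\<in>UNIV. \<Sum>l\<in>Vc coal i. qf (Vc coal i) (Wc i) (\<lambda>j. eP (Suc k) j l) (\<lambda>j. eP (Suc k) j l)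
      - qf (Vc coal i) (Wc i) (\<lambda>j. eP k j l) (\<lambda>j. eP k j l))"
    unfolding Veq by (simp add: sum_subtractf)
  also have "\<dots> \<le> (\<Sum>i\<in>UNIV. - (1/2) * (\<Sum>j\<in>Vc coal i. \<Sum>l\<in>Vc coal i. (eP k j l)\<^sup>2) + Mx * (\<Sum>j\<in>Vc coal i. dx j))"
    by (rule sum_mono) (rule per_i)
  also have "\<dots> = - (1/2) * sqnorm_e_psi coal v (\<psi> k) + Mx * (\<Sum>j\<in>UNIV. dx j)"
    unfolding Seq dxeq[symmetric] by (simp add: sum.distrib sum_distrib_left)
  also have "\<dots> \<le> - (1/2) * sqnorm_e_psi coal v (\<psi> k) + Mx * (2 * h\<^sup>2 * sqnorm_e_xi coal u (x k) (\<xi> k)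
       + 2 * real CARD('a) * h\<^sup>2 * sqnorm_e_x coal u (x k))"
    using mult_left_mono[OF xib Mx_nn] by simp
  also have "\<dots> = - (1/2) * sqnorm_e_psi coal v (\<psi> k)
             + beta_psi_xi coal E C v Wc lip * sqnorm_e_xi coal u (x k) (\<xi> k)
             + beta_psi_x coal E C v Wc lip * sqnorm_e_x coal u (x k)"
    unfolding beta_psi_x_def beta by (simp add: algebra_simps)
  finally show "V_psi coal v Wc (\<psi> (Suc k)) - V_psi coal v Wc (\<psi> k)
           \<le> - (1/2) * sqnorm_e_psi coal v (\<psi> k)
             + beta_psi_xi coal E C v Wc lip * sqnorm_e_xi coal u (x k) (\<xi> k)
             + beta_psi_x coal E C v Wc lip * sqnorm_e_x coal u (x k)" .
qed
end
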